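(* Let $A>0$, $\phi>0$, $0<\gamma<1$, and $\alpha,\beta>0$ with $\alpha+\beta<1$. For $k,N>0$ define $n^*(k,N)=\frac{1-\alpha}{2\phi kN^{\gamma}}$ and $e^*(k,N)=\frac{\alpha}{1-\alpha}\phi k^{2}N^{\gamma}$, and the map $F_S(k,N)=\big(A\,e^*(k,N)^{\alpha}k^{\beta},\ n^*(k,N)N\big)$. Let $(\bar k,\bar N)$ be the unique fixed point of $F_S$ with $\bar k,\bar N>0$. Write $\bar e=e^*(\bar k,\bar N)$ and let $$E_k=\frac{\partial e^*}{\partial k}(\bar k,\bar N)=\frac{2\alpha\phi}{1-\alpha}\bar k\bar N^{\gamma},\quad E_N=\frac{\partial e^*}{\partial N}(\bar k,\bar N)=\frac{\alpha\gamma\phi}{1-\alpha}\bar k^{2}\bar N^{\gamma-1},$$ $$D_k=\frac{\partial n^*}{\partial k}(\bar k,\bar N)=-\frac{1-\alpha}{2\phi\bar k^{2}\bar N^{\gamma}},\quad D_N=\frac{\partial n^*}{\partial N}(\bar k,\bar N)=-\frac{\gamma(1-\alpha)}{2\phi\bar k\bar N^{\gamma+1}}.$$ Suppose $$1-\frac{\alpha\bar e^{\alpha-1}E_N\bar k^{\beta}D_k\bar N}{\alpha\bar e^{\alpha-1}E_k\bar k^{\beta}+\frac{\beta}{A}}-\frac{1}{A\alpha\bar e^{\alpha-1}E_k\bar k^{\beta}+\beta}<-D_N\bar N<1-\frac{A\alpha\bar e^{\alpha-1}E_N\bar k^{\beta}D_k\bar N}{1+A\alpha\bar e^{\alpha-1}E_k\bar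 k^{\beta}+\beta}$$ and $$A\alpha\bar e^{\alpha-1}E_k\bar k^{\beta}+\beta>1.$$ Then $(\bar k,\bar N)$ is locally asymptotically stable, i.e. both eigenvalues of the Jacobian matrix of $F_S$ at $(\bar k,\bar N)$ have modulus strictly less than $1$.
   Context: Overlapping-generations model with human capital $k_t$ and adult population $N_t$, in the case where parental childcare times are perfect substitutes; $n^*$ and $e^*$ are the household's optimal fertility and education spending and the dynamics are $(k_{t+1},N_{t+1})=F_S(k_t,N_t)$. The fixed point $(\bar k,\bar N)$ is $\bar k=(A^{1/\alpha}\alpha/2)^{\alpha/(1-\beta-\alpha)}$, $\bar N=\left(\frac{1-\alpha}{2\phi\bar k}\right)^{1/\gamma}$. *)

theory Defs
  imports "HOL-Analysis.Analysis"
begin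

definition nstar :: "real \<Rightarrow> real \<Rightarrow> real \<Rightarrow> real \<Rightarrow> real \<Rightarrow> real" where
  "nstar \<alpha> \<phi> \<gamma> k N = (1 - \<alpha>) / (2 * \<phi> * k * N powr \<gamma>)"

definition estar :: "real \<Rightarrow> real \<Rightarrow> real \<Rightarrow> real \<Rightarrow> real \<Rightarrow> real" where
  "estar \<alpha> \<phi> \<gamma> k N = \<alpha> / (1 - \<alpha>) * \<phi> * k\<^sup>2 * N powr \<gamma>"

definition FS :: "real \<Rightarrow> real \<Rightarrow> real \<Rightarrow> real \<Rightarrow> real \<Rightarrow> real^2 \<Rightarrow> real^2" where
  "FS A \<alpha> \<beta> \<phi> \<gamma> x =
     vector [A * (estar \<alpha> \<phi> \<gamma> (x$1) (x$2)) powr \<alpha> * (x$1) powr \<beta>,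
             nstar \<alpha> \<phi> \<gamma> (x$1) (x$2) * x$2]"

definition is_eigenvalue :: "complex^'n^'n \<Rightarrow> complex \<Rightarrow> bool" where
  "is_eigenvalue M c \<longleftrightarrow> (\<exists>v. v \<noteq> 0 \<and> M *v v = c *s v)"

definition complexify :: "real^'n^'m \<Rightarrow> complex^'n^'m" where
  "complexify M = (\<chi> i j. complex_of_real (M $ i $ j))"

end

theory Submission
  imports Defs
begin

lemma roots_lt1:
  fixes T D :: real and \<mu> :: complex
  assumes eq: "\<mu>^2 - of_real T * \<mu> + of_real D = 0"
    and "D < 1" "1 - T + D > 0" "1 + T + D > 0"
  shows "cmod \<mu> < 1"
proof -
  obtain x y where mu: "\<mu> = Complex x y" by (cases \<mu>)
  have re: "x^2 - y^2 - T*x + D = 0" and im: "2*x*y - T*y = 0"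
    using eq unfolding mu complex_eq_iff by (simp_all add: power2_eq_square)
  have "x^2 + y^2 < 1"
  proof (cases "y = 0")
    case True
    then have r: "x*x - T*x + D = 0" using re by (simp add: power2_eq_square)
    have "\<bar>x\<bar> < 1"
    proof (rule ccontr)
      assume "\<not> \<bar>x\<bar> < 1"
      then have "x \<ge> 1 \<or> x \<le> -1" by linarith
      then show False
      proof
        assume x1: "x \<ge> 1"
        have id: "x*(1-T+D) = (1-x)*(x-D)" using r by (simp add: algebra_simps)
        have "(1-x)*(x-D) \<le> 0" using x1 assms(2) by (intro mult_nonpos_nonneg) auto
        moreover have "x*(1-T+D) > 0" using x1 assms(3) by simp
        ultimately show False using id by linarith
      next
        assume x1: "x \<le> -1"
        have id: "x*(1+T+D) = (1+x)*(x+D)" using r by (simp add: algebra_simps)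
        have "(1+x)*(x+D) \<ge> 0" using x1 assms(2) by (intro mult_nonpos_nonpos) auto
        moreover have "x*(1+T+D) < 0" using x1 assms(4) by (simp add: mult_neg_pos)
        ultimately show False using id by linarith
      qed
    qed
    then have "x^2 < 1" by (simp add: abs_square_less_1)
    then show ?thesis using True by simp
  next
    case False
    have "(2*x - T) * y = 0" using im by (simp add: algebra_simps)
    then have "2*x = T" using False by simp
    then have "T*x = 2*x*x" by auto
    moreover have "x*x - y*y - T*x + D = 0" using re by (simp add: power2_eq_square)
    ultimately have "x*x + y*y = D" by linarith
    then show ?thesis using assms(2) by (simp add: power2_eq_square)
  qed
  then show ?thesis unfolding mu cmod_def by simp
qed
lemma eig2:
  fixes M :: "real^2^2"
  assumes "is_eigenvalue (complexify M) \<mu>"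
  shows "\<mu>^2 - of_real (M$1$1 + M$2$2) * \<mu> + of_real (M$1$1 * M$2$2 - M$1$2 * M$2$1) = 0"
proof -
  obtain v where v: "v \<noteq> 0" "complexify M *v v = \<mu> *s v"
    using assms unfolding is_eigenvalue_def by blast
  define a where "a = complex_of_real (M$1$1)"
  define b where "b = complex_of_real (M$1$2)"
  define c where "c = complex_of_real (M$2$1)"
  define d where "d = complex_of_real (M$2$2)"
  have e1: "a * v$1 + b * v$2 = \<mu> * v$1" and e2: "c * v$1 + d * v$2 = \<mu> * v$2"
    using v(2) unfolding vec_eq_iff forall_2
    by (auto simp: matrix_vector_mult_def complexify_def sum_2 a_def b_def c_def d_def)
  have nz: "v$1 \<noteq> 0 \<or> v$2 \<noteq> 0" using v(1) by (auto simp: vec_eq_iff forall_2)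
  have h1: "(a - \<mu>) * v$1 = - b * v$2" using e1 by (simp add: algebra_simps)
  have h2: "c * v$1 = (\<mu> - d) * v$2" using e2 by (simp add: algebra_simps)
  have h3: "(d - \<mu>) * v$2 = - c * v$1" using e2 by (simp add: algebra_simps)
  have h4: "b * v$2 = (\<mu> - a) * v$1" using e1 by (simp add: algebra_simps)
  have "((a - \<mu>) * (d - \<mu>) - b * c) * v$1 = (d - \<mu>) * ((a - \<mu>) * v$1) - b * (c * v$1)"
    by (simp add: algebra_simps)
  also have "\<dots> = (d - \<mu>) * (- b * v$2) - b * ((\<mu> - d) * v$2)" by (simp only: h1 h2)
  also have "\<dots> = 0" by (simp add: algebra_simps)
  finally have z1: "((a - \<mu>) * (d - \<mu>) - b * c) * v$1 = 0" .
  have "((a - \<mu>) * (d - \<mu>) - b * c) * v$2 = (a - \<mu>) * ((d - \<mu>) * v$2) - c * (b * v$2)"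
    by (simp add: algebra_simps)
  also have "\<dots> = (a - \<mu>) * (- c * v$1) - c * ((\<mu> - a) * v$1)" by (simp only: h3 h4)
  also have "\<dots> = 0" by (simp add: algebra_simps)
  finally have z2: "((a - \<mu>) * (d - \<mu>) - b * c) * v$2 = 0" .
  from z1 z2 have "(a - \<mu>) * (d - \<mu>) - b * c = 0" using nz by auto
  then show ?thesis unfolding a_def b_def c_def d_def by (simp add: algebra_simps power2_eq_square)
qed

lemma hd_nth[derivative_intros]: "((\<lambda>x::real^'n. x $ i) has_derivative (\<lambda>h. h $ i)) F"
  by (rule bounded_linear_imp_has_derivative) (rule bounded_linear_vec_nth)

lemma jac_entry:
  fixes f :: "real^2 \<Rightarrow> real^2"
  assumes "(f has_derivative L) (at x)"
  shows "jacobian f (at x) $ i $ j = L (axis j 1) $ i"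
proof -
  have "f differentiable (at x)" using assms by (rule differentiableI)
  then have "(f has_derivative (\<lambda>h. jacobian f (at x) *v h)) (at x)" by (simp add: jacobian_works)
  then have "L = (\<lambda>h. jacobian f (at x) *v h)" using assms has_derivative_unique by blast
  then show ?thesis by (simp add: matrix_vector_mult_basis column_def)
qed
lemma vec2: "vector [a, b] = (a::real) *\<^sub>R axis 1 1 + b *\<^sub>R (axis 2 (1::real) :: real^2)"
  by (simp add: vec_eq_iff forall_2 axis_def)

schematic_goal FS_deriv:
  fixes x :: "real^2" assumes "x$1 > 0" "x$2 > 0" "\<alpha> < 1" "\<alpha> > 0" "\<phi> > 0"
  shows "(FS A \<alpha> \<beta> \<phi> \<gamma> has_derivative ?L) (at x)"
  unfolding FS_def vec2 estar_def nstar_def using assms by (auto intro!: derivative_eq_intros)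

lemma aux_mul: "(s::real) \<noteq> 0 \<Longrightarrow> (1 + c / s - 1 / s) * s = s + c - 1"
  by (simp add: field_simps)

theorem proposition2:
  fixes A \<phi> \<gamma> \<alpha> \<beta> kb Nb :: real
  assumes hA: "A > 0" and h\<phi>: "\<phi> > 0" and h\<gamma>: "0 < \<gamma>" "\<gamma> < 1"
    and h\<alpha>: "\<alpha> > 0" and h\<beta>: "\<beta> > 0" and h\<alpha>\<beta>: "\<alpha> + \<beta> < 1"
    and hkb: "kb > 0" and hNb: "Nb > 0"
    and hfix: "FS A \<alpha> \<beta> \<phi> \<gamma> (vector [kb, Nb]) = vector [kb, Nb]"
    and cond1:
      "let eb = estar \<alpha> \<phi> \<gamma> kb Nb;
           Ek = 2 * \<alpha> * \<phi> / (1 - \<alpha>) * kb * Nb powr \<gamma>;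
           EN = \<alpha> * \<gamma> * \<phi> / (1 - \<alpha>) * kb\<^sup>2 * Nb powr (\<gamma> - 1);
           Dk = - ((1 - \<alpha>) / (2 * \<phi> * kb\<^sup>2 * Nb powr \<gamma>));
           DN = - (\<gamma> * (1 - \<alpha>) / (2 * \<phi> * kb * Nb powr (\<gamma> + 1)))
       in 1 - (\<alpha> * eb powr (\<alpha> - 1) * EN * kb powr \<beta> * Dk * Nb)
                / (\<alpha> * eb powr (\<alpha> - 1) * Ek * kb powr \<beta> + \<beta> / A)
            - 1 / (A * \<alpha> * eb powr (\<alpha> - 1) * Ek * kb powr \<beta> + \<beta>)
          < - DN * Nb
        \<and> - DN * Nb
          < 1 - (A * \<alpha> * eb powr (\<alpha> - 1) * EN * kb powr \<beta> * Dk * Nb)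
                / (1 + A * \<alpha> * eb powr (\<alpha> - 1) * Ek * kb powr \<beta> + \<beta>)"
    and cond2:
      "let eb = estar \<alpha> \<phi> \<gamma> kb Nb;
           Ek = 2 * \<alpha> * \<phi> / (1 - \<alpha>) * kb * Nb powr \<gamma>
       in A * \<alpha> * eb powr (\<alpha> - 1) * Ek * kb powr \<beta> + \<beta> > 1"
  shows "\<forall>\<mu>. is_eigenvalue (complexify (jacobian (FS A \<alpha> \<beta> \<phi> \<gamma>) (at (vector [kb, Nb])))) \<mu>
              \<longrightarrow> cmod \<mu> < 1"
proof -
  define x0 :: "real^2" where "x0 = vector [kb, Nb]"
  have x01: "x0$1 = kb" and x02: "x0$2 = Nb" by (simp_all add: x0_def)
  define J where "J = jacobian (FS A \<alpha> \<beta> \<phi> \<gamma>) (at x0)"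
  have a1: "\<alpha> < 1" using h\<alpha>\<beta> h\<beta> by simp
  note D = FS_deriv[where x=x0 and A=A and \<beta>=\<beta> and \<gamma>=\<gamma> and \<alpha>=\<alpha> and \<phi>=\<phi>, 
     OF _ _ a1 h\<alpha> h\<phi>, unfolded x01 x02, OF hkb hNb]
  define P where "P = Nb powr \<gamma>"
  define R where "R = kb powr \<beta>"
  define E where "E = (\<alpha> * \<phi> * kb\<^sup>2 * P / (1 - \<alpha>)) powr \<alpha>"
  have P0: "P > 0" and R0: "R > 0" and E0: "E > 0" using hNb hkb h\<alpha> h\<phi> a1
    by (simp_all add: P_def R_def E_def)
  have f1: "A * E * R = kb" and f2: "(1 - \<alpha>) / (2 * \<phi> * kb * P) * Nb = Nb"
    using hfix unfolding FS_def vec_eq_iff forall_2 by (simp_all add: estar_def nstar_def E_def P_def R_def)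
  have fA: "A = kb / (E * R)" using f1 E0 R0 by (simp add: field_simps)
  have "(1 - \<alpha>) / (2 * \<phi> * kb * P) = 1" using f2 hNb by (metis less_irrefl mult_cancel_right1)
  then have f\<phi>: "\<phi> = (1 - \<alpha>) / (2 * kb * P)" using hNb hkb P0 h\<phi> a1 by (simp add: field_simps)
  have X: "2 * \<phi> * kb * P = 1 - \<alpha>" using f\<phi> hkb P0 by (simp add: field_simps)
  have nz: "P \<noteq> 0" "E \<noteq> 0" "R \<noteq> 0" "kb \<noteq> 0" "Nb \<noteq> 0" "\<phi> \<noteq> 0" "1 - \<alpha> \<noteq> 0" "\<alpha> \<noteq> 1"
    using P0 E0 R0 hkb hNb h\<phi> a1 by auto
  have J11: "J$1$1 = 2*\<alpha> + \<beta>" 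
    unfolding J_def jac_entry[OF D]
    apply (simp add: axis_def P_def[symmetric] R_def[symmetric] E_def[symmetric] nz)
    apply (simp add: fA nz field_simps power2_eq_square)
    done
  have J12: "J$1$2 = \<alpha> * \<gamma> * kb / Nb" 
    unfolding J_def jac_entry[OF D]
    apply (simp add: axis_def P_def[symmetric] R_def[symmetric] E_def[symmetric] nz)
    apply (simp add: fA nz field_simps power2_eq_square)
    done
  have J21: "J$2$1 = - Nb / kb" 
    unfolding J_def jac_entry[OF D]
    apply (simp add: axis_def P_def[symmetric] R_def[symmetric] E_def[symmetric] nz)
    apply (simp add: f\<phi> nz field_simps power2_eq_square)
    done
  have J22: "J$2$2 = 1 - \<gamma>" 
    unfolding J_def jac_entry[OF D]
    apply (simp add: axis_def P_def[symmetric] R_def[symmetric] E_def[symmetric] nz)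
    apply (simp add: nz field_simps power2_eq_square)
    apply (simp add: f\<phi> nz field_simps)
    done
  define eb where "eb = estar \<alpha> \<phi> \<gamma> kb Nb"
  define Ek where "Ek = 2 * \<alpha> * \<phi> / (1 - \<alpha>) * kb * Nb powr \<gamma>"
  define EN where "EN = \<alpha> * \<gamma> * \<phi> / (1 - \<alpha>) * kb\<^sup>2 * Nb powr (\<gamma> - 1)"
  define Dk where "Dk = - ((1 - \<alpha>) / (2 * \<phi> * kb\<^sup>2 * Nb powr \<gamma>))"
  define DN where "DN = - (\<gamma> * (1 - \<alpha>) / (2 * \<phi> * kb * Nb powr (\<gamma> + 1)))"
  have c1: "1 - (\<alpha> * eb powr (\<alpha> - 1) * EN * kb powr \<beta> * Dk * Nb)
                / (\<alpha> * eb powr (\<alpha> - 1) * Ek * kb powr \<beta> + \<beta> / A)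
            - 1 / (A * \<alpha> * eb powr (\<alpha> - 1) * Ek * kb powr \<beta> + \<beta>)
          < - DN * Nb
        \<and> - DN * Nb
          < 1 - (A * \<alpha> * eb powr (\<alpha> - 1) * EN * kb powr \<beta> * Dk * Nb)
                / (1 + A * \<alpha> * eb powr (\<alpha> - 1) * Ek * kb powr \<beta> + \<beta>)"
    using cond1 unfolding Let_def eb_def Ek_def EN_def Dk_def DN_def .
  have ebE: "eb = \<alpha> * \<phi> * kb\<^sup>2 * P / (1 - \<alpha>)" by (simp add: eb_def estar_def P_def)
  have eb0: "eb > 0" using ebE h\<alpha> h\<phi> hkb P0 a1 by simp
  have hE: "E = eb powr \<alpha>" by (simp add: E_def ebE)
  have hG: "eb powr (\<alpha> - 1) = E / eb" using eb0 by (simp add: hE powr_diff)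
  have "eb = \<alpha> * kb * (2 * \<phi> * kb * P) / (2 * (1 - \<alpha>))" using ebE nz by (simp add: power2_eq_square field_simps)
  then have "eb = \<alpha> * kb * (1 - \<alpha>) / (2 * (1 - \<alpha>))" unfolding X .
  then have heb: "eb = \<alpha> * kb / 2" using nz(7) by (metis nonzero_mult_divide_mult_cancel_right)
  have "Ek = \<alpha> * (2 * \<phi> * kb * P) / (1 - \<alpha>)" unfolding Ek_def P_def[symmetric] using nz by (simp add: field_simps)
  then have hEk: "Ek = \<alpha>" unfolding X using nz(7) by simp
  have "EN = (\<alpha> * \<gamma> * kb / (2 * Nb)) * (2 * \<phi> * kb * P) / (1 - \<alpha>)" unfolding EN_def
    using nz hNb by (simp add: field_simps power2_eq_square powr_diff P_def[symmetric])
  then have hEN: "EN = \<alpha> * \<gamma> * kb / (2 * Nb)" unfolding X using nz(7) by simp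
  have "Dk = - ((1 - \<alpha>) / ((2 * \<phi> * kb * P) * kb))" unfolding Dk_def P_def[symmetric]
    by (simp add: power2_eq_square algebra_simps)
  then have hDk: "Dk = - 1 / kb" unfolding X using nz by simp
  have "DN = - (\<gamma> * (1 - \<alpha>) / ((2 * \<phi> * kb * P) * Nb))" unfolding DN_def
    using hNb by (simp add: powr_add P_def[symmetric] algebra_simps)
  then have hDN: "DN = - \<gamma> / Nb" unfolding X using nz by simp
  have s0: "2 * \<alpha> + \<beta> > 0" using h\<alpha> h\<beta> by simp
  have s1: "1 + 2 * \<alpha> + \<beta> > 0" using h\<alpha> h\<beta> by simp
  have nzs: "2 * \<alpha> + \<beta> \<noteq> 0" "1 + 2 * \<alpha> + \<beta> \<noteq> 0" "\<alpha> \<noteq> 0" "A \<noteq> 0"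
    using s0 s1 h\<alpha> hA by auto
  have dn1: "E * (R * \<beta>) + E * (R * (\<alpha> * 2)) \<noteq> 0" using E0 R0 h\<alpha> h\<beta>
    by (metis add_pos_pos mult_pos_pos zero_less_numeral less_irrefl)
  have t1: "(\<alpha> * eb powr (\<alpha> - 1) * EN * kb powr \<beta> * Dk * Nb)
                / (\<alpha> * eb powr (\<alpha> - 1) * Ek * kb powr \<beta> + \<beta> / A) = - \<alpha> * \<gamma> / (2 * \<alpha> + \<beta>)"
    unfolding hG unfolding heb hEk hEN hDk R_def[symmetric] using nz nzs dn1
    by (simp add: fA field_simps)
  have t2: "1 / (A * \<alpha> * eb powr (\<alpha> - 1) * Ek * kb powr \<beta> + \<beta>) = 1 / (2 * \<alpha> + \<beta>)"
    unfolding hG unfolding heb hEk R_def[symmetric] using nz nzs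
    by (simp add: fA field_simps)
  have t3: "- DN * Nb = \<gamma>" unfolding hDN using nz by simp
  have c1': "1 + \<alpha> * \<gamma> / (2 * \<alpha> + \<beta>) - 1 / (2 * \<alpha> + \<beta>) < \<gamma>"
    using c1 unfolding t1 t2 t3 by simp
  then have "(1 + \<alpha> * \<gamma> / (2 * \<alpha> + \<beta>) - 1 / (2 * \<alpha> + \<beta>)) * (2 * \<alpha> + \<beta>) < \<gamma> * (2 * \<alpha> + \<beta>)"
    using s0 by (rule mult_strict_right_mono)
  moreover have "(1 + \<alpha> * \<gamma> / (2 * \<alpha> + \<beta>) - 1 / (2 * \<alpha> + \<beta>)) * (2 * \<alpha> + \<beta>)
      = (2 * \<alpha> + \<beta>) + \<alpha> * \<gamma> - 1"
    by (rule aux_mul[OF nzs(1)])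
  moreover have "(2 * \<alpha> + \<beta>) * (1 - \<gamma>) + \<alpha> * \<gamma> = (2 * \<alpha> + \<beta>) + \<alpha> * \<gamma> - \<gamma> * (2 * \<alpha> + \<beta>)"
    by (simp add: algebra_simps)
  ultimately have Dlt: "(2 * \<alpha> + \<beta>) * (1 - \<gamma>) + \<alpha> * \<gamma> < 1" by linarith
  have pos1: "\<gamma> * (1 - \<alpha> - \<beta>) > 0" using h\<gamma> h\<alpha>\<beta> by simp
  have pos2: "(2 * \<alpha> + \<beta>) * (1 - \<gamma>) > 0" using s0 h\<gamma> by simp
  have aD: "J$1$1 * J$2$2 - J$1$2 * J$2$1 = (2 * \<alpha> + \<beta>) * (1 - \<gamma>) + \<alpha> * \<gamma>"
    unfolding J11 J12 J21 J22 using nz by (simp add: field_simps)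
  show ?thesis
  proof (intro allI impI)
    fix \<mu>
    assume "is_eigenvalue (complexify (jacobian (FS A \<alpha> \<beta> \<phi> \<gamma>) (at (vector [kb, Nb])))) \<mu>"
    then have "is_eigenvalue (complexify J) \<mu>" unfolding J_def x0_def .
    from eig2[OF this] have
      eq: "\<mu>^2 - of_real (2 * \<alpha> + \<beta> + (1 - \<gamma>)) * \<mu> + of_real ((2 * \<alpha> + \<beta>) * (1 - \<gamma>) + \<alpha> * \<gamma>) = 0"
      unfolding aD by (simp add: J11 J22)
    show "cmod \<mu> < 1"
    proof (rule roots_lt1[OF eq Dlt])
      show "1 - (2 * \<alpha> + \<beta> + (1 - \<gamma>)) + ((2 * \<alpha> + \<beta>) * (1 - \<gamma>) + \<alpha> * \<gamma>) > 0"
        using pos1 by (simp add: algebra_simps)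
      show "1 + (2 * \<alpha> + \<beta> + (1 - \<gamma>)) + ((2 * \<alpha> + \<beta>) * (1 - \<gamma>) + \<alpha> * \<gamma>) > 0"
        using pos2 s0 h\<gamma> h\<alpha> by (smt (verit) mult_pos_pos)
    qed
  qed
qed

end
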